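(* Let $(X,\to,d_A)$ be a finitely branching metric transition system over $A$, and let $\alpha\colon\mathit{DPMet}(X)\to\mathrm{Pre}(X)$, $\alpha(d)=\{(x,y)\mid d(x,y)=0\}$, and $\gamma\colon\mathrm{Pre}(X)\to\mathit{DPMet}(X)$, $\gamma(R)=1-\chi_R$. Then $\alpha\circ\beta_S(d)=\beta_s\circ\alpha(d)$ for every $d\in\mathit{DPMet}(X)$, and consequently $\mu\,\beta_s=\alpha(\mu\,\beta_S)$.
   Context: $\delta(x)=\{(a,x')\mid x\xrightarrow{a}x'\}$, $\delta_a(x)=\{x'\mid x\xrightarrow{a}x'\}$; finitely branching: all $\delta(x)$ finite; $d_A$ is a metric on $A$ with values in $[0,1]$. $\mathit{DPMet}(X)$: directed pseudo-metrics on $X$, ordered pointwise; $\mathrm{Pre}(X)$: preorders on $X$, ordered by $\supseteq$; least fixpoints are taken in these lattices; $\chi_R$ is the characteristic function of $R$. $\beta_S(d)(x,y)=\bigvee_{(a,x')\in\delta(x)}\bigwedge_{(b,y')\in\delta(y)}\max\{d_A(a,b),d(x',y')\}$ (the directed simulation behaviour function; empty join $0$, empty meet $1$). $\beta_s(R)=\{(x_1,x_2)\mid\forall a\in A,\,y_1\in\delta_a(x_1)\,\exists y_2\in\delta_a(x_2)\colon y_1Ry_2\}$ (the simulation behaviour function). *)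

theory Defs
  imports Main "HOL.Real"
begin

definition delta :: "('x \<Rightarrow> 'a \<Rightarrow> 'x \<Rightarrow> bool) \<Rightarrow> 'x \<Rightarrow> ('a \<times> 'x) set" where
  "delta tr x = {(a, x'). tr x a x'}"

definition delta_a :: "('x \<Rightarrow> 'a \<Rightarrow> 'x \<Rightarrow> bool) \<Rightarrow> 'a \<Rightarrow> 'x \<Rightarrow> 'x set" where
  "delta_a tr a x = {x'. tr x a x'}"

definition finitely_branching :: "('x \<Rightarrow> 'a \<Rightarrow> 'x \<Rightarrow> bool) \<Rightarrow> bool" where
  "finitely_branching tr \<longleftrightarrow> (\<forall>x. finite (delta tr x))"

definition metric01 :: "('a \<Rightarrow> 'a \<Rightarrow> real) \<Rightarrow> bool" where
  "metric01 dA \<longleftrightarrow> (\<forall>a b. 0 \<le> dA a b \<and> dA a b \<le> 1)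
     \<and> (\<forall>a b. dA a b = 0 \<longleftrightarrow> a = b)
     \<and> (\<forall>a b. dA a b = dA b a)
     \<and> (\<forall>a b c. dA a c \<le> dA a b + dA b c)"

definition DPMet :: "('x \<Rightarrow> 'x \<Rightarrow> real) set" where
  "DPMet = {d. (\<forall>x y. 0 \<le> d x y \<and> d x y \<le> 1) \<and> (\<forall>x. d x x = 0)
               \<and> (\<forall>x y z. d x z \<le> d x y + d y z)}"

definition Pre :: "('x \<times> 'x) set set" where
  "Pre = {R. refl R \<and> trans R}"

definition alphaM :: "('x \<Rightarrow> 'x \<Rightarrow> real) \<Rightarrow> ('x \<times> 'x) set" where
  "alphaM d = {(x, y). d x y = 0}"

definition gammaM :: "('x \<times> 'x) set \<Rightarrow> ('x \<Rightarrow> 'x \<Rightarrow> real)" where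
  "gammaM R = (\<lambda>x y. 1 - (if (x, y) \<in> R then 1 else 0))"

text \<open>Directed simulation behaviour function; empty join is 0, empty meet is 1.
  For finitely branching systems the join/meet are Max/Min of finite sets.\<close>
definition betaS :: "('x \<Rightarrow> 'a \<Rightarrow> 'x \<Rightarrow> bool) \<Rightarrow> ('a \<Rightarrow> 'a \<Rightarrow> real)
    \<Rightarrow> ('x \<Rightarrow> 'x \<Rightarrow> real) \<Rightarrow> ('x \<Rightarrow> 'x \<Rightarrow> real)" where
  "betaS tr dA d x y =
     (if delta tr x = {} then 0 else
      Max ((\<lambda>(a, x'). if delta tr y = {} then 1 else
             Min ((\<lambda>(b, y'). max (dA a b) (d x' y')) ` delta tr y)) ` delta tr x))"

definition betas :: "('x \<Rightarrow> 'a \<Rightarrow> 'x \<Rightarrow> bool) \<Rightarrow> ('x \<times> 'x) set \<Rightarrow> ('x \<times> 'x) set" where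
  "betas tr R = {(x1, x2). \<forall>a. \<forall>y1 \<in> delta_a tr a x1. \<exists>y2 \<in> delta_a tr a x2. (y1, y2) \<in> R}"

definition mu_DPMet :: "(('x \<Rightarrow> 'x \<Rightarrow> real) \<Rightarrow> ('x \<Rightarrow> 'x \<Rightarrow> real)) \<Rightarrow> ('x \<Rightarrow> 'x \<Rightarrow> real)" where
  "mu_DPMet f = (THE d. d \<in> DPMet \<and> f d = d \<and> (\<forall>d' \<in> DPMet. f d' = d' \<longrightarrow> d \<le> d'))"

text \<open>Least fixpoint of f in Pre(X), ordered by reverse inclusion (so: the largest fixed preorder).\<close>
definition mu_Pre :: "(('x \<times> 'x) set \<Rightarrow> ('x \<times> 'x) set) \<Rightarrow> ('x \<times> 'x) set" where
  "mu_Pre f = (THE R. R \<in> Pre \<and> f R = R \<and> (\<forall>R' \<in> Pre. f R' = R' \<longrightarrow> R \<supseteq> R'))"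

end

theory Submission
  imports Defs
begin

definition innerS :: "('x \<Rightarrow> 'a \<Rightarrow> 'x \<Rightarrow> bool) \<Rightarrow> ('a \<Rightarrow> 'a \<Rightarrow> real)
    \<Rightarrow> ('x \<Rightarrow> 'x \<Rightarrow> real) \<Rightarrow> 'a \<Rightarrow> 'x \<Rightarrow> 'x \<Rightarrow> real" where
  "innerS tr dA d a x' y = (if delta tr y = {} then 1 else
             Min ((\<lambda>(b, y'). max (dA a b) (d x' y')) ` delta tr y))"

lemma betaS_alt: "betaS tr dA d x y =
  (if delta tr x = {} then 0 else Max ((\<lambda>(a, x'). innerS tr dA d a x' y) ` delta tr x))"
  unfolding betaS_def innerS_def by simp

lemma inner_empty: "delta tr y = {} \<Longrightarrow> innerS tr dA d a x' y = 1"
  unfolding innerS_def by simp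

lemma inner_le:
  assumes "finitely_branching tr" "(b, y') \<in> delta tr y"
  shows "innerS tr dA d a x' y \<le> max (dA a b) (d x' y')"
proof -
  have f: "finite (delta tr y)" using assms(1) unfolding finitely_branching_def by blast
  have "delta tr y \<noteq> {}" using assms(2) by blast
  then show ?thesis unfolding innerS_def using f assms(2)
    by (auto intro!: Min_le)
qed

lemma inner_att:
  assumes "finitely_branching tr" "delta tr y \<noteq> {}"
  shows "\<exists>(b, y') \<in> delta tr y. innerS tr dA d a x' y = max (dA a b) (d x' y')"
proof -
  have f: "finite (delta tr y)" using assms(1) unfolding finitely_branching_def by blast
  have "Min ((\<lambda>(b, y'). max (dA a b) (d x' y')) ` delta tr y) \<in> (\<lambda>(b, y'). max (dA a b) (d x' y')) ` delta tr y"
    using f assms(2) by (intro Min_in) auto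
  then show ?thesis unfolding innerS_def using assms(2) by auto
qed

lemma betaS_empty: "delta tr x = {} \<Longrightarrow> betaS tr dA d x y = 0"
  unfolding betaS_def by simp

lemma betaS_ge:
  assumes "finitely_branching tr" "(a, x') \<in> delta tr x"
  shows "innerS tr dA d a x' y \<le> betaS tr dA d x y"
proof -
  have f: "finite (delta tr x)" using assms(1) unfolding finitely_branching_def by blast
  have "delta tr x \<noteq> {}" using assms(2) by blast
  then show ?thesis unfolding betaS_alt using f assms(2)
    by (auto intro!: Max_ge)
qed

lemma betaS_att:
  assumes "finitely_branching tr" "delta tr x \<noteq> {}"
  shows "\<exists>(a, x') \<in> delta tr x. betaS tr dA d x y = innerS tr dA d a x' y"
proof -
  have f: "finite (delta tr x)" using assms(1) unfolding finitely_branching_def by blast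
  have "Max ((\<lambda>(a, x'). innerS tr dA d a x' y) ` delta tr x) \<in> (\<lambda>(a, x'). innerS tr dA d a x' y) ` delta tr x"
    using f assms(2) by (intro Max_in) auto
  then show ?thesis unfolding betaS_alt using assms(2) by auto
qed

lemma metric01_D: "metric01 dA \<Longrightarrow> 0 \<le> dA a b \<and> dA a b \<le> 1 \<and> (dA a b = 0 \<longleftrightarrow> a = b)
   \<and> dA a c \<le> dA a b + dA b c"
  unfolding metric01_def by blast

lemma inner_nonneg:
  assumes "finitely_branching tr" "metric01 dA" "\<forall>x y. 0 \<le> d x y"
  shows "0 \<le> innerS tr dA d a x' y"
proof (cases "delta tr y = {}")
  case True then show ?thesis by (simp add: inner_empty)
next
  case False
  then obtain b y' where "(b,y') \<in> delta tr y" "innerS tr dA d a x' y = max (dA a b) (d x' y')"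
    using inner_att[OF assms(1) False] by blast
  then show ?thesis using assms(3) by (simp add: le_max_iff_disj)
qed

lemma inner_le1:
  assumes "finitely_branching tr" "metric01 dA" "\<forall>x y. d x y \<le> 1"
  shows "innerS tr dA d a x' y \<le> 1"
proof (cases "delta tr y = {}")
  case True then show ?thesis by (simp add: inner_empty)
next
  case False
  then obtain b y' where "(b,y') \<in> delta tr y" "innerS tr dA d a x' y = max (dA a b) (d x' y')"
    using inner_att[OF assms(1) False] by blast
  then show ?thesis using assms(3) metric01_D[OF assms(2)] by simp
qed

lemma betaS_nonneg:
  assumes "finitely_branching tr" "metric01 dA" "\<forall>x y. 0 \<le> d x y"
  shows "0 \<le> betaS tr dA d x y"
proof (cases "delta tr x = {}")
  case True then show ?thesis by (simp add: betaS_empty)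
next
  case False
  then obtain a x' where "(a,x') \<in> delta tr x" "betaS tr dA d x y = innerS tr dA d a x' y"
    using betaS_att[OF assms(1) False] by blast
  then show ?thesis using inner_nonneg[OF assms] by simp
qed

lemma betaS_le1:
  assumes "finitely_branching tr" "metric01 dA" "\<forall>x y. d x y \<le> 1"
  shows "betaS tr dA d x y \<le> 1"
proof (cases "delta tr x = {}")
  case True then show ?thesis by (simp add: betaS_empty)
next
  case False
  then obtain a x' where "(a,x') \<in> delta tr x" "betaS tr dA d x y = innerS tr dA d a x' y"
    using betaS_att[OF assms(1) False] by blast
  then show ?thesis using inner_le1[OF assms] by simp
qed

lemma betaS_mono:
  assumes "finitely_branching tr" "\<And>x y. d x y \<le> d' x y"
  shows "betaS tr dA d x y \<le> betaS tr dA d' x y"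
proof (cases "delta tr x = {}")
  case True then show ?thesis by (simp add: betaS_empty)
next
  case False
  then obtain a x' where ax: "(a,x') \<in> delta tr x" "betaS tr dA d x y = innerS tr dA d a x' y"
    using betaS_att[OF assms(1) False] by blast
  have "innerS tr dA d a x' y \<le> innerS tr dA d' a x' y"
  proof (cases "delta tr y = {}")
    case True then show ?thesis by (simp add: inner_empty)
  next
    case False
    then obtain b y' where "(b,y') \<in> delta tr y" "innerS tr dA d' a x' y = max (dA a b) (d' x' y')"
      using inner_att[OF assms(1) False] by blast
    moreover have "innerS tr dA d a x' y \<le> max (dA a b) (d x' y')"
      using inner_le[OF assms(1) \<open>(b,y') \<in> delta tr y\<close>] .
    ultimately show ?thesis using assms(2)[of x' y'] by linarith
  qed
  also have "\<dots> \<le> betaS tr dA d' x y" using betaS_ge[OF assms(1) ax(1)] .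
  finally show ?thesis using ax(2) by simp
qed


lemma part1:
  assumes fb: "finitely_branching tr" and m: "metric01 dA" and nn: "\<forall>x y. 0 \<le> d x y"
  shows "alphaM (betaS tr dA d) = betas tr (alphaM d)"
proof (intro set_eqI, clarify)
  fix x y
  have "betaS tr dA d x y = 0 \<longleftrightarrow> (\<forall>a. \<forall>y1 \<in> delta_a tr a x. \<exists>y2 \<in> delta_a tr a y. d y1 y2 = 0)"
  proof
    assume z: "betaS tr dA d x y = 0"
    show "\<forall>a. \<forall>y1 \<in> delta_a tr a x. \<exists>y2 \<in> delta_a tr a y. d y1 y2 = 0"
    proof (intro allI ballI)
      fix a y1 assume "y1 \<in> delta_a tr a x"
      then have ax: "(a, y1) \<in> delta tr x" unfolding delta_a_def delta_def by simp
      have i0: "innerS tr dA d a y1 y \<le> 0" using betaS_ge[OF fb ax, where dA=dA and d=d and y=y] z by simp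
      have ne: "delta tr y \<noteq> {}" using i0 inner_empty[of tr y dA d a y1] by fastforce
      obtain b y' where by': "(b,y') \<in> delta tr y" "innerS tr dA d a y1 y = max (dA a b) (d y1 y')"
        using inner_att[OF fb ne] by blast
      have "dA a b \<le> 0" "d y1 y' \<le> 0" using by'(2) i0 by auto
      moreover have "0 \<le> d y1 y'" using nn by blast
      ultimately have "a = b" "d y1 y' = 0" using metric01_D[OF m, where a=a and b=b and c=b] by auto
      then show "\<exists>y2 \<in> delta_a tr a y. d y1 y2 = 0" using by'(1)
        unfolding delta_a_def delta_def by auto
    qed
  next
    assume h: "\<forall>a. \<forall>y1 \<in> delta_a tr a x. \<exists>y2 \<in> delta_a tr a y. d y1 y2 = 0"
    show "betaS tr dA d x y = 0"
    proof (cases "delta tr x = {}")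
      case True then show ?thesis by (simp add: betaS_empty)
    next
      case False
      then obtain a x' where ax: "(a,x') \<in> delta tr x" "betaS tr dA d x y = innerS tr dA d a x' y"
        using betaS_att[OF fb False] by blast
      then obtain y' where "y' \<in> delta_a tr a y" "d x' y' = 0" using h
        unfolding delta_a_def delta_def by auto
      then have "(a,y') \<in> delta tr y" unfolding delta_a_def delta_def by auto
      from inner_le[OF fb this, where dA=dA and d=d and a=a and x'=x'] have "innerS tr dA d a x' y \<le> 0"
        using \<open>d x' y' = 0\<close> metric01_D[OF m, where a=a and b=a] by simp
      then show ?thesis using ax(2) betaS_nonneg[OF fb m nn, where x=x and y=y] by simp
    qed
  qed
  then show "((x, y) \<in> alphaM (betaS tr dA d)) = ((x, y) \<in> betas tr (alphaM d))"
    unfolding alphaM_def betas_def by simp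
qed

lemma betaS_tri:
  assumes fb: "finitely_branching tr" and m: "metric01 dA" and dd: "d \<in> DPMet"
  shows "betaS tr dA d x z \<le> betaS tr dA d x y + betaS tr dA d y z"
proof -
  have nn: "\<forall>x y. 0 \<le> d x y" and le1: "\<forall>x y. d x y \<le> 1"
    and tri: "\<And>x y z. d x z \<le> d x y + d y z" using dd unfolding DPMet_def by auto
  have s1: "0 \<le> betaS tr dA d x y" and s2: "0 \<le> betaS tr dA d y z"
    using betaS_nonneg[OF fb m nn] by auto
  show ?thesis
  proof (cases "delta tr x = {}")
    case True then show ?thesis using s1 s2 by (simp add: betaS_empty)
  next
    case False
    then obtain a x' where ax: "(a,x') \<in> delta tr x" "betaS tr dA d x z = innerS tr dA d a x' z"
      using betaS_att[OF fb False] by blast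
    have i1: "innerS tr dA d a x' y \<le> betaS tr dA d x y" using betaS_ge[OF fb ax(1)] .
    have iz1: "innerS tr dA d a x' z \<le> 1" using inner_le1[OF fb m le1] .
    show ?thesis
    proof (cases "delta tr y = {}")
      case True
      then show ?thesis using i1 iz1 ax(2) s2 inner_empty[OF True, of dA d a x'] by linarith
    next
      case ny: False
      then obtain b y' where by': "(b,y') \<in> delta tr y" "innerS tr dA d a x' y = max (dA a b) (d x' y')"
        using inner_att[OF fb ny] by blast
      have i2: "innerS tr dA d b y' z \<le> betaS tr dA d y z" using betaS_ge[OF fb by'(1)] .
      show ?thesis
      proof (cases "delta tr z = {}")
        case True
        then show ?thesis using i2 iz1 ax(2) s1 inner_empty[OF True, of dA d b y'] by linarith
      next
        case nz: False
        then obtain c z' where cz: "(c,z') \<in> delta tr z" "innerS tr dA d b y' z = max (dA b c) (d y' z')"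
          using inner_att[OF fb nz] by blast
        have "innerS tr dA d a x' z \<le> max (dA a c) (d x' z')" using inner_le[OF fb cz(1)] .
        have t: "d x' z' \<le> d x' y' + d y' z'" using tri by blast
        have n1: "0 \<le> d x' y'" "0 \<le> d y' z'" using nn by auto
        have "innerS tr dA d a x' z \<le> max (dA a c) (d x' z')" using inner_le[OF fb cz(1)] .
        also have "\<dots> \<le> max (dA a b) (d x' y') + max (dA b c) (d y' z')"
          using metric01_D[OF m, where a=a and b=b and c=c] t n1
            metric01_D[OF m, where a=b and b=c and c=c]
          by (auto simp: max_def)
        finally show ?thesis using ax(2) by'(2) cz(2) i1 i2 by linarith
      qed
    qed
  qed
qed

lemma betaS_DPMet:
  assumes fb: "finitely_branching tr" and m: "metric01 dA" and dd: "d \<in> DPMet"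
  shows "betaS tr dA d \<in> DPMet"
proof -
  have nn: "\<forall>x y. 0 \<le> d x y" and le1: "\<forall>x y. d x y \<le> 1" and rf: "\<And>x. d x x = 0"
    using dd unfolding DPMet_def by auto
  have "betaS tr dA d x x = 0" for x
  proof (cases "delta tr x = {}")
    case True then show ?thesis by (simp add: betaS_empty)
  next
    case False
    then obtain a x' where ax: "(a,x') \<in> delta tr x" "betaS tr dA d x x = innerS tr dA d a x' x"
      using betaS_att[OF fb False] by blast
    have "innerS tr dA d a x' x \<le> 0" using inner_le[OF fb ax(1), where dA=dA and d=d and a=a and x'=x'] rf[of x']
      metric01_D[OF m, where a=a and b=a] by simp
    then show ?thesis using ax(2) betaS_nonneg[OF fb m nn, where x=x and y=x] by simp
  qed
  then show ?thesis unfolding DPMet_def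
    using betaS_nonneg[OF fb m nn] betaS_le1[OF fb m le1] betaS_tri[OF fb m dd] by auto
qed


definition dseq :: "('x \<Rightarrow> 'a \<Rightarrow> 'x \<Rightarrow> bool) \<Rightarrow> ('a \<Rightarrow> 'a \<Rightarrow> real) \<Rightarrow> nat \<Rightarrow> ('x \<Rightarrow> 'x \<Rightarrow> real)" where
  "dseq tr dA n = (betaS tr dA ^^ n) (\<lambda>x y. 0)"

lemma dseq_0: "dseq tr dA 0 = (\<lambda>x y. 0)" unfolding dseq_def by simp
lemma dseq_Suc: "dseq tr dA (Suc n) = betaS tr dA (dseq tr dA n)" unfolding dseq_def by simp

lemma dseq_DPMet:
  assumes fb: "finitely_branching tr" and m: "metric01 dA"
  shows "dseq tr dA n \<in> DPMet"
proof (induction n)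
  case 0 show ?case unfolding dseq_0 DPMet_def by simp
next
  case (Suc n) then show ?case unfolding dseq_Suc using betaS_DPMet[OF fb m] by blast
qed

lemma DPMet_D: "d \<in> DPMet \<Longrightarrow> 0 \<le> d x y \<and> d x y \<le> 1 \<and> d x x = 0 \<and> d x z \<le> d x y + d y z"
  unfolding DPMet_def by blast

lemma dseq_inc:
  assumes fb: "finitely_branching tr" and m: "metric01 dA"
  shows "\<forall>x y. dseq tr dA n x y \<le> dseq tr dA (Suc n) x y"
proof (induction n)
  case 0 show ?case unfolding dseq_Suc dseq_0 using betaS_nonneg[OF fb m] by simp
next
  case (Suc n) then show ?case unfolding dseq_Suc[of tr dA "Suc n"] dseq_Suc[of tr dA n]
    using betaS_mono[OF fb] by metis
qed

lemma dseq_mono: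
  assumes fb: "finitely_branching tr" and m: "metric01 dA" and "n \<le> k"
  shows "dseq tr dA n x y \<le> dseq tr dA k x y"
  using lift_Suc_mono_le[of "\<lambda>n. dseq tr dA n x y", OF _ assms(3)] dseq_inc[OF fb m] by blast

lemma finite_common:
  assumes "finite F" "\<forall>f\<in>F. \<exists>n::nat. P f n" "\<And>f n k. P f n \<Longrightarrow> n \<le> k \<Longrightarrow> P f k"
  shows "\<exists>N. \<forall>f\<in>F. P f N"
  using assms(1,2)
proof (induction F rule: finite_induct)
  case empty then show ?case by simp
next
  case (insert g F)
  then obtain N where N: "\<forall>f\<in>F. P f N" by blast
  obtain n where n: "P g n" using insert by blast
  have "\<forall>f\<in>insert g F. P f (max N n)" using N n assms(3) by (auto intro: max.cobounded1 max.cobounded2)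
  then show ?case by blast
qed

definition Dlim :: "('x \<Rightarrow> 'a \<Rightarrow> 'x \<Rightarrow> bool) \<Rightarrow> ('a \<Rightarrow> 'a \<Rightarrow> real) \<Rightarrow> ('x \<Rightarrow> 'x \<Rightarrow> real)" where
  "Dlim tr dA = (\<lambda>x y. SUP n. dseq tr dA n x y)"

context
  fixes tr :: "'x \<Rightarrow> 'a \<Rightarrow> 'x \<Rightarrow> bool" and dA :: "'a \<Rightarrow> 'a \<Rightarrow> real"
  assumes fb: "finitely_branching tr" and m: "metric01 dA"
begin

lemma bdd: "bdd_above (range (\<lambda>n. dseq tr dA n x y))"
  using DPMet_D[OF dseq_DPMet[OF fb m]] by (intro bdd_aboveI[where M=1]) blast

lemma D_upper: "dseq tr dA n x y \<le> Dlim tr dA x y"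
  unfolding Dlim_def by (rule cSUP_upper[OF _ bdd]) simp

lemma D_least: "(\<And>n. dseq tr dA n x y \<le> c) \<Longrightarrow> Dlim tr dA x y \<le> c"
  unfolding Dlim_def by (rule cSUP_least) auto

lemma D_less: "t < Dlim tr dA x y \<Longrightarrow> \<exists>n. t < dseq tr dA n x y"
  unfolding Dlim_def using less_cSUP_iff[OF _ bdd] by blast

lemma D_DPMet: "Dlim tr dA \<in> DPMet"
proof -
  have a: "0 \<le> Dlim tr dA x y" for x y using D_upper[of 0 x y] by (simp add: dseq_0)
  have b: "Dlim tr dA x y \<le> 1" for x y using DPMet_D[OF dseq_DPMet[OF fb m]] by (intro D_least) blast
  have c: "Dlim tr dA x x \<le> 0" for x using DPMet_D[OF dseq_DPMet[OF fb m]] by (intro D_least) auto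
  have d: "Dlim tr dA x z \<le> Dlim tr dA x y + Dlim tr dA y z" for x y z
  proof (rule D_least)
    fix n
    have "dseq tr dA n x z \<le> dseq tr dA n x y + dseq tr dA n y z"
      using DPMet_D[OF dseq_DPMet[OF fb m]] by blast
    then show "dseq tr dA n x z \<le> Dlim tr dA x y + Dlim tr dA y z"
      using D_upper[of n x y] D_upper[of n y z] by linarith
  qed
  show ?thesis unfolding DPMet_def using a b c d by (auto intro: antisym)
qed

lemma D_below:
  assumes "\<forall>x y. 0 \<le> g x y" "\<And>x y. betaS tr dA g x y \<le> g x y"
  shows "Dlim tr dA x y \<le> g x y"
proof -
  have "\<forall>x y. dseq tr dA n x y \<le> g x y" for n
  proof (induction n)
    case 0 then show ?case using assms(1) by (simp add: dseq_0)
  next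
    case (Suc n) then show ?case unfolding dseq_Suc using betaS_mono[OF fb, of "dseq tr dA n" g] assms(2)
      by (meson order_trans)
  qed
  then show ?thesis by (intro D_least) blast
qed

lemma D_fix: "betaS tr dA (Dlim tr dA) = Dlim tr dA"
proof (intro ext antisym)
  fix x y
  show "Dlim tr dA x y \<le> betaS tr dA (Dlim tr dA) x y"
  proof (rule D_least)
    fix n show "dseq tr dA n x y \<le> betaS tr dA (Dlim tr dA) x y"
    proof (cases n)
      case 0 then show ?thesis using betaS_nonneg[OF fb m] DPMet_D[OF D_DPMet] by (simp add: dseq_0)
    next
      case (Suc k) then show ?thesis using betaS_mono[OF fb, of "dseq tr dA k" "Dlim tr dA"] D_upper by (simp add: dseq_Suc)
    qed
  qed
  show "betaS tr dA (Dlim tr dA) x y \<le> Dlim tr dA x y"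
  proof (cases "delta tr x = {}")
    case True then show ?thesis using DPMet_D[OF D_DPMet] by (simp add: betaS_empty)
  next
    case False
    then obtain a x' where ax: "(a,x') \<in> delta tr x" "betaS tr dA (Dlim tr dA) x y = innerS tr dA (Dlim tr dA) a x' y"
      using betaS_att[OF fb False] by blast
    show ?thesis
    proof (rule ccontr)
      assume "\<not> ?thesis"
      then have lt: "Dlim tr dA x y < innerS tr dA (Dlim tr dA) a x' y" using ax(2) by simp
      show False
      proof (cases "delta tr y = {}")
        case True
        have "innerS tr dA (dseq tr dA 0) a x' y \<le> dseq tr dA (Suc 0) x y"
          unfolding dseq_Suc by (rule betaS_ge[OF fb ax(1)])
        then show False using lt D_upper[of "Suc 0" x y] by (simp add: inner_empty[OF True])
      next
        case ny: False
        have "\<forall>f\<in>delta tr y. \<exists>n. Dlim tr dA x y < max (dA a (fst f)) (dseq tr dA n x' (snd f))"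
        proof
          fix f assume f: "f \<in> delta tr y"
          obtain b y' where fe: "f = (b,y')" by (cases f)
          have "Dlim tr dA x y < max (dA a b) (Dlim tr dA x' y')"
            using lt inner_le[OF fb f[unfolded fe], where dA=dA and d="Dlim tr dA" and a=a and x'=x'] by linarith
          then have "Dlim tr dA x y < dA a b \<or> Dlim tr dA x y < Dlim tr dA x' y'" by (simp add: less_max_iff_disj)
          then show "\<exists>n. Dlim tr dA x y < max (dA a (fst f)) (dseq tr dA n x' (snd f))"
          proof
            assume "Dlim tr dA x y < dA a b" then show ?thesis using fe by (auto simp: less_max_iff_disj)
          next
            assume "Dlim tr dA x y < Dlim tr dA x' y'"
            then obtain n where "Dlim tr dA x y < dseq tr dA n x' y'" using D_less by blast
            then show ?thesis using fe by (auto simp: less_max_iff_disj)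
          qed
        qed
        moreover have "finite (delta tr y)" using fb unfolding finitely_branching_def by blast
        moreover have "\<And>f n k. Dlim tr dA x y < max (dA a (fst f)) (dseq tr dA n x' (snd f)) \<Longrightarrow> n \<le> k
            \<Longrightarrow> Dlim tr dA x y < max (dA a (fst f)) (dseq tr dA k x' (snd f))"
        proof -
          fix f n k assume h: "Dlim tr dA x y < max (dA a (fst f)) (dseq tr dA n x' (snd f))" "n \<le> k"
          have "dseq tr dA n x' (snd f) \<le> dseq tr dA k x' (snd f)" using dseq_mono[OF fb m h(2)] .
          then show "Dlim tr dA x y < max (dA a (fst f)) (dseq tr dA k x' (snd f))" using h(1)
            by (simp add: less_max_iff_disj) linarith
        qed
        ultimately obtain N where N: "\<forall>f\<in>delta tr y. Dlim tr dA x y < max (dA a (fst f)) (dseq tr dA N x' (snd f))"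
          using finite_common[of "delta tr y" "\<lambda>f n. Dlim tr dA x y < max (dA a (fst f)) (dseq tr dA n x' (snd f))"]
          by blast
        obtain b y' where by': "(b,y') \<in> delta tr y" "innerS tr dA (dseq tr dA N) a x' y = max (dA a b) (dseq tr dA N x' y')"
          using inner_att[OF fb ny] by blast
        have "innerS tr dA (dseq tr dA N) a x' y \<le> dseq tr dA (Suc N) x y"
          unfolding dseq_Suc by (rule betaS_ge[OF fb ax(1)])
        moreover have "Dlim tr dA x y < max (dA a b) (dseq tr dA N x' y')" using N by'(1) by fastforce
        ultimately show False using by'(2) D_upper[of "Suc N" x y] by linarith
      qed
    qed
  qed
qed

end


lemma betas_mono: "mono (betas tr)"
  unfolding mono_def betas_def by blast

lemma sim_Pre: "gfp (betas tr) \<in> Pre"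
proof -
  let ?S = "gfp (betas tr)"
  have fx: "betas tr ?S = ?S" using gfp_fixpoint[OF betas_mono] .
  have "Id \<subseteq> betas tr Id" unfolding betas_def by auto
  then have r: "Id \<subseteq> ?S" by (rule gfp_upperbound)
  have "?S O ?S \<subseteq> betas tr (?S O ?S)"
  proof
    fix p assume "p \<in> ?S O ?S"
    then obtain x y z where p: "p = (x,z)" "(x,y) \<in> ?S" "(y,z) \<in> ?S" by blast
    then have "(x,y) \<in> betas tr ?S" "(y,z) \<in> betas tr ?S" using fx by auto
    then show "p \<in> betas tr (?S O ?S)" unfolding betas_def p(1) by fastforce
  qed
  then have "?S O ?S \<subseteq> ?S" by (rule gfp_upperbound)
  then show ?thesis unfolding Pre_def using r by (auto simp: refl_on_def trans_def)
qed

lemma mu_Pre_eq: "mu_Pre (betas tr) = gfp (betas tr)"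
  unfolding mu_Pre_def
proof (rule the_equality)
  show "gfp (betas tr) \<in> Pre \<and> betas tr (gfp (betas tr)) = gfp (betas tr) \<and>
    (\<forall>R'\<in>Pre. betas tr R' = R' \<longrightarrow> R' \<subseteq> gfp (betas tr))"
    using sim_Pre gfp_fixpoint[OF betas_mono] gfp_upperbound[of _ "betas tr"] by auto
next
  fix R assume h: "R \<in> Pre \<and> betas tr R = R \<and> (\<forall>R'\<in>Pre. betas tr R' = R' \<longrightarrow> R' \<subseteq> R)"
  then have "gfp (betas tr) \<subseteq> R" using sim_Pre gfp_fixpoint[OF betas_mono] by blast
  moreover have "R \<subseteq> gfp (betas tr)" using h by (intro gfp_upperbound) simp
  ultimately show "R = gfp (betas tr)" by blast
qed

lemma D_le_fix:
  assumes fb: "finitely_branching tr" and m: "metric01 dA" and d: "d \<in> DPMet" "betaS tr dA d = d"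
  shows "Dlim tr dA \<le> d"
proof -
  have n: "\<forall>x y. 0 \<le> d x y" using DPMet_D[OF d(1)] by blast
  have "Dlim tr dA x y \<le> d x y" for x y using D_below[OF fb m n] d(2) by simp
  then show ?thesis by (simp add: le_fun_def)
qed

lemma mu_DPMet_eq:
  assumes fb: "finitely_branching tr" and m: "metric01 dA"
  shows "mu_DPMet (betaS tr dA) = Dlim tr dA"
  unfolding mu_DPMet_def
proof (rule the_equality)
  show "Dlim tr dA \<in> DPMet \<and> betaS tr dA (Dlim tr dA) = Dlim tr dA \<and>
    (\<forall>d'\<in>DPMet. betaS tr dA d' = d' \<longrightarrow> Dlim tr dA \<le> d')"
    using D_DPMet[OF fb m] D_fix[OF fb m] D_le_fix[OF fb m] by blast
next
  fix d assume h: "d \<in> DPMet \<and> betaS tr dA d = d \<and> (\<forall>d'\<in>DPMet. betaS tr dA d' = d' \<longrightarrow> d \<le> d')"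
  then have "d \<le> Dlim tr dA" using D_DPMet[OF fb m] D_fix[OF fb m] by blast
  moreover have "Dlim tr dA \<le> d" using h D_le_fix[OF fb m] by blast
  ultimately show "d = Dlim tr dA" by simp
qed

theorem mainTheorem18:
  fixes tr :: "'x \<Rightarrow> 'a \<Rightarrow> 'x \<Rightarrow> bool" and dA :: "'a \<Rightarrow> 'a \<Rightarrow> real"
  assumes "metric01 dA"
    and "finitely_branching tr"
  shows "(\<forall>d \<in> DPMet. alphaM (betaS tr dA d) = betas tr (alphaM d))
         \<and> mu_Pre (betas tr) = alphaM (mu_DPMet (betaS tr dA))"
proof
  note m = assms(1) and fb = assms(2)
  have P1: "alphaM (betaS tr dA d) = betas tr (alphaM d)" if "\<forall>x y. 0 \<le> d x y" for d
    using part1[OF fb m that] .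
  show "\<forall>d \<in> DPMet. alphaM (betaS tr dA d) = betas tr (alphaM d)"
  proof
    fix d :: "'x \<Rightarrow> 'x \<Rightarrow> real" assume "d \<in> DPMet"
    then have "\<forall>x y. 0 \<le> d x y" unfolding DPMet_def by blast
    then show "alphaM (betaS tr dA d) = betas tr (alphaM d)" by (rule P1)
  qed
  let ?S = "gfp (betas tr)" and ?D = "Dlim tr dA"
  have Dn: "\<forall>x y. 0 \<le> ?D x y" using D_DPMet[OF fb m] unfolding DPMet_def by blast
  have "betas tr (alphaM ?D) = alphaM (betaS tr dA ?D)" using P1[OF Dn] by (rule sym)
  also have "\<dots> = alphaM ?D" by (subst D_fix[OF fb m]) (rule refl)
  finally have "betas tr (alphaM ?D) = alphaM ?D" .
  then have s1: "alphaM ?D \<subseteq> ?S" by (intro gfp_upperbound) simp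
  let ?g = "gammaM ?S"
  have gn: "\<forall>x y. 0 \<le> ?g x y" unfolding gammaM_def by simp
  have ag: "alphaM ?g = ?S" unfolding alphaM_def gammaM_def by auto
  have "betaS tr dA ?g x y \<le> ?g x y" for x y
  proof (cases "(x,y) \<in> ?S")
    case True
    have fx: "betas tr ?S = ?S" by (rule gfp_fixpoint[OF betas_mono])
    have "(x,y) \<in> alphaM (betaS tr dA ?g)" unfolding P1[OF gn] ag fx by (rule True)
    then show ?thesis unfolding alphaM_def gammaM_def using True by simp
  next
    case False
    have g1: "\<forall>x y. ?g x y \<le> 1" unfolding gammaM_def by simp
    have "betaS tr dA ?g x y \<le> 1" using betaS_le1[OF fb m g1] .
    then show ?thesis unfolding gammaM_def using False by simp
  qed
  then have "?D x y \<le> ?g x y" for x y by (rule D_below[OF fb m gn])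
  then have le: "?D x y \<le> 0" if "(x,y) \<in> ?S" for x y
  proof -
    have "?D x y \<le> ?g x y" by fact
    also have "?g x y = 0" unfolding gammaM_def using that by simp
    finally show ?thesis .
  qed
  have s2: "?S \<subseteq> alphaM ?D"
  proof
    fix p assume "p \<in> ?S"
    then obtain x y where p: "p = (x,y)" "(x,y) \<in> ?S" by (cases p) auto
    have "0 \<le> ?D x y" using Dn by blast
    then have "?D x y = 0" using le[OF p(2)] by linarith
    then show "p \<in> alphaM ?D" unfolding alphaM_def p(1) by simp
  qed
  show "mu_Pre (betas tr) = alphaM (mu_DPMet (betaS tr dA))"
    unfolding mu_Pre_eq mu_DPMet_eq[OF fb m] using s1 s2 by blast
qed

end
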